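(* Let $\mathcal{H}_B$ be the two-mode bosonic Fock space with orthonormal basis $\{\lvert m_1, m_0\rangle_B : m_1, m_0 \ge 0\}$, where $\lvert m_1,m_0\rangle_B$ denotes $m_1$ photons in the "$1$" mode and $m_0$ photons in the "$0$" mode. Let $\mathcal{H}_E$ be a Hilbert space. Let $$\lvert\psi_0\rangle = \sum_{m_1\ge 0,\, m_0\ge 0} \lvert m_1,m_0\rangle_B \lvert e_{m_1,m_0}\rangle_E \in \mathcal{H}_B\otimes\mathcal{H}_E$$ be a unit vector, where the $\lvert e_{m_1,m_0}\rangle_E\in\mathcal{H}_E$ are (unnormalized) vectors. Let $U_R$ be a unitary operator on $\mathcal{H}_B\otimes\mathcal{H}_E$ such that for all $m_1,m_0\ge 0$, $$U_R \lvert m_1,m_0\rangle_B\lvert e_{m_1,m_0}\rangle_E = \lvert 0,1\rangle_B \lvert g^{0,1}_{m_1,m_0}\rangle_E + \lvert 1,0\rangle_B \lvert g^{1,0}_{m_1,m_0}\rangle_E + \lvert 0,0\rangle_B \lvert g^{0,0}_{m_1,m_0}\rangle_E$$ for some vectors $\lvert g^{j,k}_{m_1,m_0}\rangle_E\in\mathcal{H}_E$. Define $$\lvert h_0\rangle_E = \frac{1}{\sqrt 2}\sum_{m_1\ge 1,\, m_0\ge 1}\lvert g^{0,1}_{m_1,m_0}\rangle_E,\qquad \lvert h_1\rangle_E = \frac{1}{\sqrt 2}\sum_{m_1\ge 1,\, m_0\ge 1}\lvert g^{1,0}_{m_1,m_0}\rangle_E,$$ and $$p_{\mathrm{double}} =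 \sum_{m_1\ge 1,\, m_0\ge 1}\langle e_{m_1,m_0}\vert e_{m_1,m_0}\rangle_E .$$ Then $\langle h_0\vert h_0\rangle_E \le \frac12 p_{\mathrm{double}}$ and $\langle h_1\vert h_1\rangle_E \le \frac12 p_{\mathrm{double}}$.
   Context: $p_{\mathrm{double}}$ is the probability that a computational-basis photon-number measurement of the $B$ system of $\lvert\psi_0\rangle$ yields at least one photon in each of the two modes (a "double-click"). Infinite sums are understood as norm-convergent sums in the respective Hilbert spaces. *)

theory Defs
  imports "HOL-Analysis.Analysis"
begin

text \<open>H_E is modelled as l2('x) for an arbitrary index type 'x (every complex Hilbert
space is unitarily isomorphic to such a space via an orthonormal basis).
H_B (x) H_E is modelled as l2(nat x nat, H_E) = l2(nat x nat x 'x):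
a vector is a function psi m1 m0 x; the component psi m1 m0 is the H_E-vector
attached to the Fock basis vector |m1,m0>_B.\<close>

type_synonym 'x vecE = "'x \<Rightarrow> complex"
type_synonym 'x vecT = "nat \<Rightarrow> nat \<Rightarrow> 'x \<Rightarrow> complex"

definition l2E :: "'x vecE set" where
  "l2E = {f. (\<lambda>x. (cmod (f x))\<^sup>2) summable_on UNIV}"

definition normE :: "'x vecE \<Rightarrow> real" where
  "normE f = sqrt (\<Sum>\<^sub>\<infinity>x. (cmod (f x))\<^sup>2)"

definition l2T :: "'x vecT set" where
  "l2T = {\<psi>. (\<lambda>(a,b,x). (cmod (\<psi> a b x))\<^sup>2) summable_on UNIV}"

definition innerT :: "'x vecT \<Rightarrow> 'x vecT \<Rightarrow> complex" where
  "innerT \<psi> \<phi> = (\<Sum>\<^sub>\<infinity>(a,b,x). cnj (\<psi> a b x) * \<phi> a b x)"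

definition normT :: "'x vecT \<Rightarrow> real" where
  "normT \<psi> = sqrt (\<Sum>\<^sub>\<infinity>(a,b,x). (cmod (\<psi> a b x))\<^sup>2)"

definition ket :: "nat \<Rightarrow> nat \<Rightarrow> 'x vecE \<Rightarrow> 'x vecT" where
  "ket m1 m0 v = (\<lambda>a b x. if a = m1 \<and> b = m0 then v x else 0)"

definition addT :: "'x vecT \<Rightarrow> 'x vecT \<Rightarrow> 'x vecT" where
  "addT \<psi> \<phi> = (\<lambda>a b x. \<psi> a b x + \<phi> a b x)"

definition unitaryT :: "('x vecT \<Rightarrow> 'x vecT) \<Rightarrow> bool" where
  "unitaryT U \<longleftrightarrow> U ` l2T = l2T \<and>
     (\<forall>\<psi>\<in>l2T. \<forall>\<phi>\<in>l2T. \<forall>c::complex.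
        U (\<lambda>a b x. \<psi> a b x + c * \<phi> a b x) = (\<lambda>a b x. U \<psi> a b x + c * U \<phi> a b x)) \<and>
     (\<forall>\<psi>\<in>l2T. \<forall>\<phi>\<in>l2T. innerT (U \<psi>) (U \<phi>) = innerT \<psi> \<phi>)"

definition hasSumE :: "('i \<Rightarrow> 'x vecE) \<Rightarrow> 'i set \<Rightarrow> 'x vecE \<Rightarrow> bool" where
  "hasSumE g A s \<longleftrightarrow> (\<forall>\<epsilon>>0. \<exists>F. finite F \<and> F \<subseteq> A \<and>
     (\<forall>G. finite G \<and> F \<subseteq> G \<and> G \<subseteq> A \<longrightarrow>
        normE (\<lambda>x. (\<Sum>i\<in>G. g i x) - s x) < \<epsilon>))"

end

theory Submission
  imports Defs "HOL-Analysis.Analysis"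
begin


lemma normE_nonneg: "normE f \<ge> 0"
  unfolding normE_def by (simp add: infsum_nonneg)

lemma l2E_add:
  assumes f: "f \<in> l2E" and g: "g \<in> l2E"
  shows "(\<lambda>x. f x + g x) \<in> l2E \<and> normE (\<lambda>x. f x + g x) \<le> normE f + normE g"
proof -
  let ?F = "\<lambda>x. (cmod (f x))\<^sup>2" and ?G = "\<lambda>x. (cmod (g x))\<^sup>2" and ?H = "\<lambda>x. (cmod (f x + g x))\<^sup>2"
  have sf: "?F summable_on UNIV" and sg: "?G summable_on UNIV" using f g by (auto simp: l2E_def)
  have bnd: "sum ?H X \<le> (normE f + normE g)\<^sup>2" if "finite X" for X
  proof -
    have "sqrt (sum ?H X) \<le> L2_set (\<lambda>x. cmod (f x) + cmod (g x)) X"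
      unfolding L2_set_def
      by (intro real_sqrt_le_mono sum_mono power_mono norm_triangle_ineq) auto
    also have "\<dots> \<le> L2_set (\<lambda>x. cmod (f x)) X + L2_set (\<lambda>x. cmod (g x)) X"
      by (rule L2_set_triangle_ineq)
    also have "L2_set (\<lambda>x. cmod (f x)) X \<le> normE f"
      unfolding L2_set_def normE_def
      by (intro real_sqrt_le_mono finite_sum_le_infsum sf that) auto
    also have "L2_set (\<lambda>x. cmod (g x)) X \<le> normE g"
      unfolding L2_set_def normE_def
      by (intro real_sqrt_le_mono finite_sum_le_infsum sg that) auto
    finally have "sqrt (sum ?H X) \<le> normE f + normE g" by simp
    moreover have "sum ?H X \<ge> 0" by (simp add: sum_nonneg)
    ultimately show ?thesis
      by (metis real_sqrt_le_iff real_sqrt_pow2 power_mono real_sqrt_ge_zero)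
  qed
  have sh: "?H summable_on UNIV"
    by (rule nonneg_bdd_above_summable_on) (auto intro!: bdd_aboveI[where M="(normE f + normE g)\<^sup>2"] bnd)
  have "infsum ?H UNIV \<le> (normE f + normE g)\<^sup>2"
    by (rule infsum_le_finite_sums[OF sh]) (use bnd in auto)
  hence "normE (\<lambda>x. f x + g x) \<le> sqrt ((normE f + normE g)\<^sup>2)"
    unfolding normE_def by (rule real_sqrt_le_mono)
  also have "\<dots> = normE f + normE g"
    using normE_nonneg[of f] normE_nonneg[of g] by simp
  finally have "normE (\<lambda>x. f x + g x) \<le> normE f + normE g" .
  with sh show ?thesis by (simp add: l2E_def)
qed

lemma normE_cmult: "normE (\<lambda>x. c * f x) = cmod c * normE f"
proof -
  have "(\<Sum>\<^sub>\<infinity>x. (cmod (c * f x))\<^sup>2) = (cmod c)\<^sup>2 * (\<Sum>\<^sub>\<infinity>x. (cmod (f x))\<^sup>2)"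
    by (simp add: norm_mult power_mult_distrib infsum_cmult_right')
  thus ?thesis unfolding normE_def by (simp add: real_sqrt_mult)
qed

lemma l2E_cmult: "f \<in> l2E \<Longrightarrow> (\<lambda>x. c * f x) \<in> l2E"
  unfolding l2E_def by (simp add: norm_mult power_mult_distrib summable_on_cmult_right)

lemma l2E_zero: "f \<in> l2E \<Longrightarrow> normE f = 0 \<Longrightarrow> f = (\<lambda>x. 0)"
proof
  fix x assume f: "f \<in> l2E" and n: "normE f = 0"
  have "(cmod (f x))\<^sup>2 \<le> (\<Sum>\<^sub>\<infinity>x. (cmod (f x))\<^sup>2)"
    using finite_sum_le_infsum[of "\<lambda>x. (cmod (f x))\<^sup>2" UNIV "{x}"] f by (auto simp: l2E_def)
  also have "\<dots> = 0" using n unfolding normE_def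
    by (metis infsum_nonneg real_sqrt_eq_zero_cancel_iff zero_le_power2)
  finally show "f x = 0" by simp
qed




definition restr :: "'x vecT \<Rightarrow> (nat \<times> nat) set \<Rightarrow> 'x vecT" where
  "restr e S = (\<lambda>a b x. if (a, b) \<in> S then e a b x else 0)"

lemma triple_pair_sum:
  "infsum (\<lambda>(a,b,x). f a b x) UNIV = infsum (\<lambda>((a,b),x). (f a b x :: real)) UNIV"
  by (rule infsum_reindex_bij_witness[where i="\<lambda>((a,b),x). (a,b,x)" and j="\<lambda>(a,b,x). ((a,b),x)"]) auto

lemma triple_pair_summable:
  "(\<lambda>(a,b,x). f a b x) summable_on UNIV \<longleftrightarrow> (\<lambda>((a,b),x). (f a b x :: real)) summable_on UNIV"
  by (rule summable_on_reindex_bij_witness[where i="\<lambda>((a,b),x). (a,b,x)" and j="\<lambda>(a,b,x). ((a,b),x)"]) auto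

lemma l2T_pair: "e \<in> l2T \<Longrightarrow> (\<lambda>((a,b),x). (cmod (e a b x))\<^sup>2) summable_on UNIV"
  unfolding l2T_def using triple_pair_summable[of "\<lambda>a b x. (cmod (e a b x))\<^sup>2"] by simp

lemma restr_l2T:
  assumes e: "e \<in> l2T" shows "restr e S \<in> l2T"
proof -
  have s: "(\<lambda>((a,b),x). (cmod (e a b x))\<^sup>2) summable_on (Sigma S (\<lambda>_. UNIV))"
    using summable_on_subset_banach[OF l2T_pair[OF e]] by blast
  have "(\<lambda>((a,b),x). (cmod (restr e S a b x))\<^sup>2) summable_on UNIV"
    using s by (subst summable_on_cong_neutral[where T="Sigma S (\<lambda>_. UNIV)"
        and g="\<lambda>((a,b),x). (cmod (e a b x))\<^sup>2"]) (auto simp: restr_def split: if_splits)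
  thus ?thesis unfolding l2T_def using triple_pair_summable[of "\<lambda>a b x. (cmod (restr e S a b x))\<^sup>2"] by simp
qed

lemma n_summable:
  assumes e: "e \<in> l2T" shows "(\<lambda>(a,b). \<Sum>\<^sub>\<infinity>x. (cmod (e a b x))\<^sup>2) summable_on UNIV"
proof -
  have s: "(\<lambda>((a,b),x). (cmod (e a b x))\<^sup>2) summable_on (Sigma UNIV (\<lambda>_. UNIV))"
    using l2T_pair[OF e] by simp
  have s': "(\<lambda>(p,x). (cmod (e (fst p) (snd p) x))\<^sup>2) summable_on (Sigma UNIV (\<lambda>_. UNIV))"
  proof -
    have eq: "(\<lambda>((a,b),x). (cmod (e a b x))\<^sup>2) = (\<lambda>(p,x). (cmod (e (fst p) (snd p) x))\<^sup>2)"
      by (auto simp: fun_eq_iff)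
    show ?thesis using s unfolding eq .
  qed
  have "(\<lambda>p. infsum (\<lambda>x. (\<lambda>(p,x). (cmod (e (fst p) (snd p) x))\<^sup>2) (p, x)) UNIV) summable_on UNIV"
    by (rule summable_on_SigmaD[OF s'], simp, rule summable_on_SigmaD1[OF s']) simp
  moreover have "(\<lambda>(a,b). \<Sum>\<^sub>\<infinity>x. (cmod (e a b x))\<^sup>2) = (\<lambda>p. \<Sum>\<^sub>\<infinity>x. (cmod (e (fst p) (snd p) x))\<^sup>2)"
    by (auto simp: fun_eq_iff)
  ultimately show ?thesis by simp
qed

lemma normT_restr:
  assumes e: "e \<in> l2T"
  shows "(normT (restr e S))\<^sup>2 = infsum (\<lambda>(a,b). \<Sum>\<^sub>\<infinity>x. (cmod (e a b x))\<^sup>2) S"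
proof -
  have s: "(\<lambda>((a,b),x). (cmod (e a b x))\<^sup>2) summable_on (Sigma S (\<lambda>_. UNIV))"
    using summable_on_subset_banach[OF l2T_pair[OF e]] by blast
  have "(\<Sum>\<^sub>\<infinity>(a,b,x). (cmod (restr e S a b x))\<^sup>2) = (\<Sum>\<^sub>\<infinity>((a,b),x). (cmod (restr e S a b x))\<^sup>2)"
    by (rule triple_pair_sum)
  also have "\<dots> = infsum (\<lambda>((a,b),x). (cmod (e a b x))\<^sup>2) (Sigma S (\<lambda>_. UNIV))"
    by (rule infsum_cong_neutral) (auto simp: restr_def split: if_splits)
  also have "\<dots> = infsum (\<lambda>p. infsum (\<lambda>x. (\<lambda>((a,b),x). (cmod (e a b x))\<^sup>2) (p, x)) UNIV) S"
    by (rule infsum_Sigma_banach[symmetric]) (use s in simp)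
  also have "\<dots> = infsum (\<lambda>(a,b). \<Sum>\<^sub>\<infinity>x. (cmod (e a b x))\<^sup>2) S"
    by (rule infsum_cong) (auto simp: case_prod_beta)
  moreover have "0 \<le> infsum (\<lambda>(a,b). \<Sum>\<^sub>\<infinity>x. (cmod (e a b x))\<^sup>2) S"
    by (rule infsum_nonneg) (auto simp: infsum_nonneg)
  ultimately show ?thesis unfolding normT_def by simp
qed



lemma infsum_of_real_c:
  "infsum (\<lambda>x. complex_of_real (f x)) A = complex_of_real (infsum f A)"
proof (cases "f summable_on A")
  case True
  thus ?thesis by (intro infsumI has_sum_of_real has_sum_infsum)
next
  case False
  have "\<not> (\<lambda>x. complex_of_real (f x)) summable_on A"
  proof
    assume "(\<lambda>x. complex_of_real (f x)) summable_on A"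
    from summable_on_bounded_linear[OF bounded_linear_Re this]
    have "f summable_on A" by (simp add: o_def)
    with False show False by simp
  qed
  with False show ?thesis by (simp add: infsum_not_exists)
qed

lemma cnj_mult_self: "cnj z * z = complex_of_real ((cmod z)\<^sup>2)"
  by (metis complex_norm_square mult.commute of_real_power)

lemma normT_inner: "normT \<psi> = sqrt (Re (innerT \<psi> \<psi>))"
proof -
  have "innerT \<psi> \<psi> = (\<Sum>\<^sub>\<infinity>(a,b,x). complex_of_real ((cmod (\<psi> a b x))\<^sup>2))"
    unfolding innerT_def
    by (rule infsum_cong) (auto simp only: cnj_mult_self)
  also have "\<dots> = complex_of_real (\<Sum>\<^sub>\<infinity>(a,b,x). (cmod (\<psi> a b x))\<^sup>2)"
  proof -
    have "(\<lambda>(a,b,x). complex_of_real ((cmod (\<psi> a b x))\<^sup>2)) = (\<lambda>t. complex_of_real ((\<lambda>(a,b,x). (cmod (\<psi> a b x))\<^sup>2) t))"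
      by (auto simp only: fun_eq_iff split: prod.splits)
    thus ?thesis using infsum_of_real_c[of "\<lambda>(a,b,x). (cmod (\<psi> a b x))\<^sup>2" UNIV] by metis
  qed
  finally show ?thesis unfolding normT_def by simp
qed

lemma U_norm: "unitaryT U \<Longrightarrow> \<psi> \<in> l2T \<Longrightarrow> normT (U \<psi>) = normT \<psi>"
  unfolding unitaryT_def normT_inner by simp

lemma U_l2T: "unitaryT U \<Longrightarrow> \<psi> \<in> l2T \<Longrightarrow> U \<psi> \<in> l2T"
  unfolding unitaryT_def by blast

lemma zero_l2T: "(\<lambda>a b x. 0) \<in> l2T"
  unfolding l2T_def by (simp add: summable_on_0 case_prod_beta)

lemma U_add: "unitaryT U \<Longrightarrow> \<psi> \<in> l2T \<Longrightarrow> \<phi> \<in> l2T \<Longrightarrow>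
   U (\<lambda>a b x. \<psi> a b x + \<phi> a b x) = (\<lambda>a b x. U \<psi> a b x + U \<phi> a b x)"
proof -
  assume "unitaryT U" "\<psi> \<in> l2T" "\<phi> \<in> l2T"
  hence "U (\<lambda>a b x. \<psi> a b x + 1 * \<phi> a b x) = (\<lambda>a b x. U \<psi> a b x + 1 * U \<phi> a b x)"
    unfolding unitaryT_def by blast
  thus ?thesis by simp
qed

lemma U_zero: assumes "unitaryT U" shows "U (\<lambda>a b x. 0) = (\<lambda>a b x. 0)"
proof -
  have "U (\<lambda>a b x. 0 + 0) = (\<lambda>a b x. U (\<lambda>a b x. 0) a b x + U (\<lambda>a b x. 0) a b x)"
    by (rule U_add[OF assms zero_l2T zero_l2T])
  hence "\<And>a b x. U (\<lambda>a b x. 0) a b x = U (\<lambda>a b x. 0) a b x + U (\<lambda>a b x. 0) a b x"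
    by (metis add_0)
  thus ?thesis by (auto simp: fun_eq_iff)
qed

lemma restr_single: "restr e {(m1, m0)} = ket m1 m0 (e m1 m0)"
  by (auto simp: restr_def ket_def fun_eq_iff)

lemma U_restr_finite:
  assumes U: "unitaryT U" and e: "e \<in> l2T" and G: "finite G"
  shows "U (restr e G) = (\<lambda>a b x. \<Sum>p\<in>G. U (ket (fst p) (snd p) (e (fst p) (snd p))) a b x)"
  using G
proof (induction G rule: finite_induct)
  case empty
  have "restr e {} = (\<lambda>a b x. 0)" by (simp add: restr_def)
  thus ?case using U_zero[OF U] by simp
next
  case (insert p G)
  have "restr e (insert p G) = (\<lambda>a b x. restr e G a b x + restr e {p} a b x)"
    using insert(2) by (auto simp: restr_def fun_eq_iff)
  hence "U (restr e (insert p G)) = (\<lambda>a b x. U (restr e G) a b x + U (restr e {p}) a b x)"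
    using U_add[OF U restr_l2T[OF e] restr_l2T[OF e]] by simp
  moreover have "restr e {p} = ket (fst p) (snd p) (e (fst p) (snd p))"
    using restr_single[of e "fst p" "snd p"] by simp
  ultimately show ?case using insert by (simp add: add.commute)
qed

lemma component_bound:
  assumes "\<phi> \<in> l2T"
  shows "\<phi> a b \<in> l2E \<and> normE (\<phi> a b) \<le> normT \<phi>"
proof -
  let ?h = "\<lambda>(a,b,x). (cmod (\<phi> a b x))\<^sup>2"
  have s: "?h summable_on UNIV" using assms by (simp add: l2T_def)
  have inj: "inj (\<lambda>x. (a, b, x))" by (auto simp: inj_def)
  have s2: "?h summable_on range (\<lambda>x. (a, b, x))"
    using summable_on_subset_banach[OF s] by blast
  hence s3: "(\<lambda>x. (cmod (\<phi> a b x))\<^sup>2) summable_on UNIV"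
    using summable_on_reindex[OF inj, of ?h] by (simp add: o_def)
  have "(\<Sum>\<^sub>\<infinity>x. (cmod (\<phi> a b x))\<^sup>2) = infsum ?h (range (\<lambda>x. (a, b, x)))"
    using infsum_reindex[OF inj, of ?h] by (simp add: o_def)
  also have "\<dots> \<le> infsum ?h UNIV"
    by (rule infsum_mono_neutral[OF s2 s]) auto
  finally show ?thesis using s3 unfolding l2E_def normE_def normT_def
    by (auto intro: real_sqrt_le_mono)
qed



lemma normE_not_l2: "f \<notin> l2E \<Longrightarrow> normE f = 0"
  unfolding l2E_def normE_def by (simp add: infsum_not_exists)

lemma normE_diff_swap: "normE (\<lambda>x. f x - g x) = normE (\<lambda>x. g x - f x)"
  using normE_cmult[of "-1" "\<lambda>x. f x - g x"] by simp

lemma l2E_diff: "f \<in> l2E \<Longrightarrow> g \<in> l2E \<Longrightarrow> (\<lambda>x. f x - g x) \<in> l2E"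
  using l2E_add[of f "\<lambda>x. (-1) * g x"] l2E_cmult[of g "-1"] by simp

lemma hasSumE_unique:
  assumes h1: "hasSumE g D s" and h2: "hasSumE g D s0"
    and l1: "s \<in> l2E" and l2: "s0 \<in> l2E"
    and fin: "\<And>G. finite G \<Longrightarrow> G \<subseteq> D \<Longrightarrow> (\<lambda>x. \<Sum>i\<in>G. g i x) \<in> l2E"
  shows "s = s0"
proof -
  have "normE (\<lambda>x. s x - s0 x) \<le> 2 * \<epsilon>" if eps: "\<epsilon> > 0" for \<epsilon>
  proof -
    obtain F1 where F1: "finite F1" "F1 \<subseteq> D" "\<And>G. finite G \<and> F1 \<subseteq> G \<and> G \<subseteq> D \<Longrightarrow>
        normE (\<lambda>x. (\<Sum>i\<in>G. g i x) - s x) < \<epsilon>"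
      using h1[unfolded hasSumE_def, rule_format, OF eps] by blast
    obtain F2 where F2: "finite F2" "F2 \<subseteq> D" "\<And>G. finite G \<and> F2 \<subseteq> G \<and> G \<subseteq> D \<Longrightarrow>
        normE (\<lambda>x. (\<Sum>i\<in>G. g i x) - s0 x) < \<epsilon>"
      using h2[unfolded hasSumE_def, rule_format, OF eps] by blast
    define G where "G = F1 \<union> F2"
    have G: "finite G" "F1 \<subseteq> G" "F2 \<subseteq> G" "G \<subseteq> D" using F1 F2 by (auto simp: G_def)
    let ?S = "\<lambda>x. \<Sum>i\<in>G. g i x"
    have lS: "?S \<in> l2E" using fin G by simp
    have eq: "(\<lambda>x. (s x - ?S x) + (?S x - s0 x)) = (\<lambda>x. s x - s0 x)" by auto
    have t0: "normE (\<lambda>x. (s x - ?S x) + (?S x - s0 x)) \<le> normE (\<lambda>x. s x - ?S x) + normE (\<lambda>x. ?S x - s0 x)"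
      using l2E_add[OF l2E_diff[OF l1 lS] l2E_diff[OF lS l2]] by blast
    have t: "normE (\<lambda>x. s x - s0 x) \<le> normE (\<lambda>x. s x - ?S x) + normE (\<lambda>x. ?S x - s0 x)"
      using t0 unfolding eq .
    have a: "normE (\<lambda>x. s x - ?S x) = normE (\<lambda>x. ?S x - s x)"
      by (rule normE_diff_swap)
    have b: "normE (\<lambda>x. ?S x - s x) < \<epsilon>"
      using F1(3)[of G] G by simp
    have c: "normE (\<lambda>x. ?S x - s0 x) < \<epsilon>"
      using F2(3)[of G] G by simp
    show ?thesis using t a b c by linarith
  qed
  note key = this
  have "normE (\<lambda>x. s x - s0 x) \<le> 0"
  proof (rule ccontr)
    assume "\<not> normE (\<lambda>x. s x - s0 x) \<le> 0"
    hence "normE (\<lambda>x. s x - s0 x) / 4 > 0" by simp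
    from key[OF this] \<open>\<not> _ \<le> 0\<close> show False by linarith
  qed
  hence "normE (\<lambda>x. s x - s0 x) = 0" using normE_nonneg[of "\<lambda>x. s x - s0 x"] by linarith
  hence z: "(\<lambda>x. s x - s0 x) = (\<lambda>x. 0)" by (rule l2E_zero[OF l2E_diff[OF l1 l2]])
  have "s x - s0 x = 0" for x using fun_cong[OF z, of x] by simp
  thus ?thesis by (intro ext) simp
qed



lemma generic:
  fixes e :: "'x vecT" and g :: "nat \<times> nat \<Rightarrow> 'x vecE"
  assumes U: "unitaryT U" and e: "e \<in> l2T"
    and comp: "\<And>G x. finite G \<Longrightarrow> U (restr e G) i j x = (\<Sum>p\<in>G. g p x)"
  shows "(\<exists>s. hasSumE g D s) \<and> (\<forall>s. hasSumE g D s \<longrightarrow>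
     (normE (\<lambda>x. s x / complex_of_real (sqrt 2)))\<^sup>2 \<le> infsum (\<lambda>(a,b). \<Sum>\<^sub>\<infinity>x. (cmod (e a b x))\<^sup>2) D / 2)"
proof -
  define n where "n = (\<lambda>(a,b). \<Sum>\<^sub>\<infinity>x. (cmod (e a b x))\<^sup>2)"
  define s0 where "s0 = U (restr e D) i j"
  have ns: "n summable_on D" unfolding n_def
    using summable_on_subset_banach[OF n_summable[OF e]] by blast
  have n_nonneg: "0 \<le> infsum n S" for S unfolding n_def
    by (rule infsum_nonneg) (auto simp: infsum_nonneg)
  have normT_r: "normT (restr e S) = sqrt (infsum n S)" for S
  proof -
    have "normT (restr e S) \<ge> 0" unfolding normT_def by (intro real_sqrt_ge_zero infsum_nonneg) auto
    thus ?thesis using normT_restr[OF e, of S] unfolding n_def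
      by (metis real_sqrt_abs abs_of_nonneg)
  qed
  have cb: "U (restr e S) i j \<in> l2E \<and> normE (U (restr e S) i j) \<le> sqrt (infsum n S)" for S
    using component_bound[OF U_l2T[OF U restr_l2T[OF e, of S]], of i j] U_norm[OF U restr_l2T[OF e, of S]] normT_r[of S]
    by simp
  have split: "U (restr e D) = (\<lambda>a b x. U (restr e G) a b x + U (restr e (D - G)) a b x)" if "G \<subseteq> D" for G
  proof -
    have "restr e D = (\<lambda>a b x. restr e G a b x + restr e (D - G) a b x)"
      using that by (auto simp: restr_def fun_eq_iff)
    thus ?thesis using U_add[OF U restr_l2T[OF e] restr_l2T[OF e]] by simp
  qed
  have tail: "normE (\<lambda>x. (\<Sum>p\<in>G. g p x) - s0 x) \<le> sqrt (infsum n D - sum n G)"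
    if G: "finite G" "G \<subseteq> D" for G
  proof -
    have "(\<lambda>x. (\<Sum>p\<in>G. g p x) - s0 x) = (\<lambda>x. (-1) * U (restr e (D - G)) i j x)"
      using split[OF G(2)] comp[OF G(1)] by (auto simp: s0_def fun_eq_iff)
    hence "normE (\<lambda>x. (\<Sum>p\<in>G. g p x) - s0 x) = normE (U (restr e (D - G)) i j)"
      using normE_cmult[of "-1" "U (restr e (D - G)) i j"] by simp
    also have "\<dots> \<le> sqrt (infsum n (D - G))" using cb by blast
    also have "infsum n (D - G) = infsum n D - sum n G"
      using infsum_Diff[OF ns summable_on_subset_banach[OF ns G(2)] G(2)] G(1) by simp
    finally show ?thesis .
  qed
  have hs0: "hasSumE g D s0"
    unfolding hasSumE_def
  proof (intro allI impI)
    fix \<epsilon> :: real assume eps: "\<epsilon> > 0"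
    have "((\<lambda>F. sum n F) \<longlongrightarrow> infsum n D) (finite_subsets_at_top D)"
      by (rule infsum_tendsto[OF ns])
    hence "eventually (\<lambda>F. dist (sum n F) (infsum n D) < \<epsilon>\<^sup>2) (finite_subsets_at_top D)"
    proof -
      have "\<epsilon>\<^sup>2 > 0" using eps by simp
      with \<open>(_ \<longlongrightarrow> _) _\<close> show ?thesis unfolding tendsto_iff by blast
    qed
    then obtain F where F: "finite F" "F \<subseteq> D"
      "\<And>G. finite G \<Longrightarrow> F \<subseteq> G \<Longrightarrow> G \<subseteq> D \<Longrightarrow> dist (sum n G) (infsum n D) < \<epsilon>\<^sup>2"
    proof -
      from \<open>eventually _ _\<close>[unfolded eventually_finite_subsets_at_top]
      obtain X where X: "finite X" "X \<subseteq> D"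
        "\<forall>Y. finite Y \<and> X \<subseteq> Y \<and> Y \<subseteq> D \<longrightarrow> dist (sum n Y) (infsum n D) < \<epsilon>\<^sup>2"
        by (elim exE conjE) (rule that)
      show ?thesis
      proof (rule that[OF X(1) X(2)])
        fix G assume "finite G" "X \<subseteq> G" "G \<subseteq> D"
        thus "dist (sum n G) (infsum n D) < \<epsilon>\<^sup>2" using X(3) by simp
      qed
    qed
    show "\<exists>F. finite F \<and> F \<subseteq> D \<and> (\<forall>G. finite G \<and> F \<subseteq> G \<and> G \<subseteq> D \<longrightarrow>
        normE (\<lambda>x. (\<Sum>i\<in>G. g i x) - s0 x) < \<epsilon>)"
    proof (intro exI conjI allI impI)
      fix G assume G: "finite G \<and> F \<subseteq> G \<and> G \<subseteq> D"
      have "infsum n D - sum n G < \<epsilon>\<^sup>2" using F(3)[of G] G by (simp add: dist_real_def)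
      hence "sqrt (infsum n D - sum n G) < sqrt (\<epsilon>\<^sup>2)" by (rule real_sqrt_less_mono)
      also have "\<dots> = \<epsilon>" using eps by simp
      finally show "normE (\<lambda>x. (\<Sum>i\<in>G. g i x) - s0 x) < \<epsilon>"
        using tail[of G] G by linarith
    qed (use F in auto)
  qed
  have s0l: "s0 \<in> l2E" using cb by (simp add: s0_def)
  have fin: "(\<lambda>x. \<Sum>p\<in>G. g p x) \<in> l2E" if "finite G" for G
  proof -
    have "(\<lambda>x. \<Sum>p\<in>G. g p x) = U (restr e G) i j" using comp[OF that] by (simp add: fun_eq_iff)
    thus ?thesis using cb by simp
  qed
  have c2: "cmod (1 / complex_of_real (sqrt 2)) = 1 / sqrt 2"
    by (simp add: norm_divide)
  have final: "(normE (\<lambda>x. s x / complex_of_real (sqrt 2)))\<^sup>2 \<le> infsum n D / 2"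
    if hs: "hasSumE g D s" for s
  proof (cases "s \<in> l2E")
    case True
    have "s = s0" by (rule hasSumE_unique[OF hs hs0 True s0l fin]) simp
    have "normE (\<lambda>x. s x / complex_of_real (sqrt 2)) = normE (\<lambda>x. (1 / complex_of_real (sqrt 2)) * s x)"
      by simp
    also have "\<dots> = normE s / sqrt 2" unfolding normE_cmult c2 by simp
    finally have "(normE (\<lambda>x. s x / complex_of_real (sqrt 2)))\<^sup>2 = (normE s)\<^sup>2 / 2"
      by (simp add: power_divide)
    also have "(normE s)\<^sup>2 \<le> (sqrt (infsum n D))\<^sup>2"
      using cb[of D] \<open>s = s0\<close> normE_nonneg[of s] by (simp add: s0_def power_mono)
    also have "\<dots> = infsum n D" using n_nonneg by simp
    finally show ?thesis by simp
  next
    case False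
    have "(\<lambda>x. s x / complex_of_real (sqrt 2)) \<notin> l2E"
    proof
      assume "(\<lambda>x. s x / complex_of_real (sqrt 2)) \<in> l2E"
      from l2E_cmult[OF this, of "complex_of_real (sqrt 2)"] have "s \<in> l2E" by simp
      with False show False by simp
    qed
    hence "normE (\<lambda>x. s x / complex_of_real (sqrt 2)) = 0" by (rule normE_not_l2)
    thus ?thesis using n_nonneg[of D] by simp
  qed
  show ?thesis using hs0 final unfolding n_def by blast
qed


theorem lemma1:
  fixes e g01 g10 g00 :: "nat \<Rightarrow> nat \<Rightarrow> 'x \<Rightarrow> complex"
    and U :: "'x vecT \<Rightarrow> 'x vecT"
  assumes e_l2: "e \<in> l2T"
    and unit: "normT e = 1"
    and g_l2: "\<And>m1 m0. g01 m1 m0 \<in> l2E \<and> g10 m1 m0 \<in> l2E \<and> g00 m1 m0 \<in> l2E"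
    and U_unitary: "unitaryT U"
    and U_action: "\<And>m1 m0. U (ket m1 m0 (e m1 m0)) =
         addT (ket 0 1 (g01 m1 m0)) (addT (ket 1 0 (g10 m1 m0)) (ket 0 0 (g00 m1 m0)))"
  defines "D \<equiv> {(m1, m0). m1 \<ge> (1::nat) \<and> m0 \<ge> (1::nat)}"
    and "p_double \<equiv> (\<Sum>\<^sub>\<infinity>(m1, m0)\<in>{(m1, m0). m1 \<ge> (1::nat) \<and> m0 \<ge> (1::nat)}. (normE (e m1 m0))\<^sup>2)"
  shows "(\<exists>s. hasSumE (\<lambda>(m1, m0). g01 m1 m0) D s)
       \<and> (\<exists>s. hasSumE (\<lambda>(m1, m0). g10 m1 m0) D s)
       \<and> (\<forall>s. hasSumE (\<lambda>(m1, m0). g01 m1 m0) D s \<longrightarrow>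
            (normE (\<lambda>x. s x / complex_of_real (sqrt 2)))\<^sup>2 \<le> p_double / 2)
       \<and> (\<forall>s. hasSumE (\<lambda>(m1, m0). g10 m1 m0) D s \<longrightarrow>
            (normE (\<lambda>x. s x / complex_of_real (sqrt 2)))\<^sup>2 \<le> p_double / 2)"
  proof -
  have n_eq: "p_double = infsum (\<lambda>(a,b). \<Sum>\<^sub>\<infinity>x. (cmod (e a b x))\<^sup>2) D"
    unfolding p_double_def D_def
    by (rule infsum_cong) (auto simp: normE_def infsum_nonneg)
  have c01: "U (restr e G) 0 1 x = (\<Sum>p\<in>G. (\<lambda>(m1, m0). g01 m1 m0) p x)" if "finite G" for G x
  proof -
    have "U (ket (fst p) (snd p) (e (fst p) (snd p))) 0 1 x = g01 (fst p) (snd p) x" for p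
      by (cases p) (simp only: U_action fst_conv snd_conv, simp add: addT_def ket_def)
    thus ?thesis using U_restr_finite[OF U_unitary e_l2 that]
      by (simp add: case_prod_beta)
  qed
  have c10: "U (restr e G) 1 0 x = (\<Sum>p\<in>G. (\<lambda>(m1, m0). g10 m1 m0) p x)" if "finite G" for G x
  proof -
    have "U (ket (fst p) (snd p) (e (fst p) (snd p))) 1 0 x = g10 (fst p) (snd p) x" for p
      by (cases p) (simp only: U_action fst_conv snd_conv, simp add: addT_def ket_def)
    thus ?thesis using U_restr_finite[OF U_unitary e_l2 that]
      by (simp add: case_prod_beta)
  qed
  note r1 = generic[OF U_unitary e_l2 c01, of D]
  note r2 = generic[OF U_unitary e_l2 c10, of D]
  show ?thesis using r1 r2 unfolding n_eq[symmetric] by blast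
qed

end
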